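(* Let $m\geq 1$, let $\Lambda_m,\Delta_m\subseteq\mathbb{R}^{2^m}$ and $\Lambda_{m+1}\subseteq\mathbb{R}^{2^{m+1}}$ be the lattices defined below, and let $\iota,\tau:\mathbb{Z}^{2^m}\to\mathbb{Z}^{2^{m+1}}$ be the maps defined below. Then $\Lambda_{m+1}=\{\iota(\ell)+\iota(d)+\tau(\ell)\mid \ell\in\Lambda_m,\ d\in\Delta_m\}$.
   Context: For $n\ge 1$ let $\mathcal{V}_n=\mathbb{F}_2^n$ and let $(e_v\mid v\in\mathcal{V}_n)$ be an orthonormal basis of $\mathbb{R}^{2^n}$ indexed by $\mathcal{V}_n$; let $\Gamma_n=\langle e_v\mid v\in\mathcal{V}_n\rangle_{\mathbb{Z}}$. For $\mathcal{U}\subseteq\mathcal{V}_n$ put $x_{\mathcal{U}}=\sum_{v\in\mathcal{U}}e_v$. Define $\Lambda_n=\langle 2^{\lfloor (n-r)/2\rfloor}x_{\mathcal{U}} \mid 0\le r\le n,\ \mathcal{U}\text{ an affine subspace of }\mathcal{V}_n,\ \dim\mathcal{U}=r\rangle_{\mathbb{Z}}$ and $\Delta_n=\langle 2^{\lfloor (n-r+1)/2\rfloor}x_{\mathcal{U}} \mid 0\le r\le n,\ \mathcal{U}\text{ an affine subspace of }\mathcal{V}_n,\ \dim\mathcal{U}=r\rangle_{\mathbb{Z}}$. Fix a basis $(v_1,\dots,v_{m+1})$ of $\mathcal{V}_{m+1}$ and identify $\mathcal{V}_m$ with $\langle v_1,\dots,v_m\rangle$ via the embedding $\iota:\mathcal{V}_m\hookrightarrow\mathcal{V}_{m+1}$;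 let $\tau:\mathcal{V}_m\to\mathcal{V}_{m+1}$, $v\mapsto v_{m+1}+\iota(v)$, so $\mathcal{V}_{m+1}=\iota(\mathcal{V}_m)\,\dot\cup\,\tau(\mathcal{V}_m)$. Also denote by $\iota,\tau:\Gamma_m\to\Gamma_{m+1}$ the $\mathbb{Z}$-linear maps with $\iota(e_v)=e_{\iota(v)}$ and $\tau(e_v)=e_{\tau(v)}$ for $v\in\mathcal{V}_m$ (isometric embeddings with $\Gamma_{m+1}=\iota(\Gamma_m)\perp\tau(\Gamma_m)$). *)

theory Defs
  imports Main
begin

text \<open>Vectors of F_2^n are represented as subsets of {0..<n} (coordinates equal to 1);
  addition is symmetric difference.\<close>

definition Vsp :: "nat \<Rightarrow> nat set set" where
  "Vsp n = Pow {..<n}"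

definition vadd :: "nat set \<Rightarrow> nat set \<Rightarrow> nat set" where
  "vadd a c = (a - c) \<union> (c - a)"

text \<open>F_2-linear combination: sum of the vectors b i for i in S.\<close>
definition lincomb :: "(nat \<Rightarrow> nat set) \<Rightarrow> nat set \<Rightarrow> nat set" where
  "lincomb b S = {x. odd (card {i \<in> S. x \<in> b i})}"

definition affine_sub :: "nat \<Rightarrow> nat \<Rightarrow> nat set set \<Rightarrow> bool" where
  "affine_sub n r U \<longleftrightarrow> (\<exists>a b. a \<in> Vsp n \<and> (\<forall>i<r. b i \<in> Vsp n)
      \<and> inj_on (lincomb b) (Pow {..<r})
      \<and> U = {vadd a (lincomb b S) | S. S \<subseteq> {..<r}})"

text \<open>Vectors of R^{2^n} with integer coordinates indexed by F_2^n (all vectors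
  considered lie in Gamma_n); x_U is the indicator vector.\<close>
definition xvec :: "nat set set \<Rightarrow> (nat set \<Rightarrow> int)" where
  "xvec U = (\<lambda>v. if v \<in> U then 1 else 0)"

definition zspan :: "(nat set \<Rightarrow> int) set \<Rightarrow> (nat set \<Rightarrow> int) set" where
  "zspan G = {x. \<exists>F c. finite F \<and> F \<subseteq> G \<and> x = (\<lambda>v. \<Sum>g\<in>F. c g * g v)}"

definition Lam :: "nat \<Rightarrow> (nat set \<Rightarrow> int) set" where
  "Lam n = zspan {(\<lambda>v. 2 ^ ((n - r) div 2) * xvec U v) | r U. r \<le> n \<and> affine_sub n r U}"

definition Del :: "nat \<Rightarrow> (nat set \<Rightarrow> int) set" where
  "Del n = zspan {(\<lambda>v. 2 ^ ((n - r + 1) div 2) * xvec U v) | r U. r \<le> n \<and> affine_sub n r U}"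

text \<open>Given a basis b_0,...,b_m of F_2^{m+1} (paper: v_1..v_{m+1}), the embeddings
  iota(v) = sum_{i in v} b_i and tau(v) = b_m + iota(v) on F_2^m.\<close>
definition iota_v :: "(nat \<Rightarrow> nat set) \<Rightarrow> nat set \<Rightarrow> nat set" where
  "iota_v b v = lincomb b v"

definition tau_v :: "(nat \<Rightarrow> nat set) \<Rightarrow> nat \<Rightarrow> nat set \<Rightarrow> nat set" where
  "tau_v b m v = vadd (b m) (lincomb b v)"

definition iota_vec :: "(nat \<Rightarrow> nat set) \<Rightarrow> nat \<Rightarrow> (nat set \<Rightarrow> int) \<Rightarrow> (nat set \<Rightarrow> int)" where
  "iota_vec b m x = (\<lambda>w. \<Sum>v\<in>Vsp m. if iota_v b v = w then x v else 0)"

definition tau_vec :: "(nat \<Rightarrow> nat set) \<Rightarrow> nat \<Rightarrow> (nat set \<Rightarrow> int) \<Rightarrow> (nat set \<Rightarrow> int)" where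
  "tau_vec b m x = (\<lambda>w. \<Sum>v\<in>Vsp m. if tau_v b m v = w then x v else 0)"

end

theory Submission
  imports Defs
begin

lemma in_vadd[simp]: "x \<in> vadd a c \<longleftrightarrow> (x \<in> a \<longleftrightarrow> x \<notin> c)"
  by (auto simp: vadd_def)
lemma vadd_comm: "vadd a c = vadd c a" by auto
lemma vadd_assoc: "vadd (vadd a c) d = vadd a (vadd c d)" by auto
lemma vadd_left_commute: "vadd a (vadd c d) = vadd c (vadd a d)" by auto
lemma vadd_self[simp]: "vadd a a = {}" by auto
lemma vadd_empty[simp]: "vadd a {} = a" "vadd {} a = a" by auto
lemma vadd_cancel[simp]: "vadd a (vadd a c) = c" "vadd a (vadd c a) = c" by auto
lemma vadd_sub: "a \<subseteq> X \<Longrightarrow> c \<subseteq> X \<Longrightarrow> vadd a c \<subseteq> X" by auto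
lemma vadd_finite: "finite a \<Longrightarrow> finite c \<Longrightarrow> finite (vadd a c)"
  by (simp add: vadd_def)
lemma vadd_inj: "vadd a x = vadd a y \<longleftrightarrow> x = y" by (metis vadd_cancel(1))

lemma lincomb_empty[simp]: "lincomb b {} = {}"
  by (simp add: lincomb_def)

lemma lincomb_insert:
  assumes "finite S" "k \<notin> S"
  shows "lincomb b (insert k S) = vadd (b k) (lincomb b S)"
proof -
  have "card {i \<in> insert k S. x \<in> b i} = card {i \<in> S. x \<in> b i} + (if x \<in> b k then 1 else 0)" for x
  proof (cases "x \<in> b k")
    case True
    then have "{i \<in> insert k S. x \<in> b i} = insert k {i \<in> S. x \<in> b i}" by auto
    then show ?thesis using assms True by simp
  next
    case False
    then have "{i \<in> insert k S. x \<in> b i} = {i \<in> S. x \<in> b i}" by auto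
    then show ?thesis using False by simp
  qed
  then show ?thesis by (intro set_eqI) (simp add: lincomb_def)
qed

lemma lincomb_vadd:
  assumes "finite S" "finite T"
  shows "lincomb b (vadd S T) = vadd (lincomb b S) (lincomb b T)"
proof -
  have "odd (card {i \<in> vadd S T. x \<in> b i}) \<longleftrightarrow>
        (odd (card {i \<in> S. x \<in> b i}) \<longleftrightarrow> \<not> odd (card {i \<in> T. x \<in> b i}))" for x
  proof -
    define A where "A = {i \<in> S. x \<in> b i}"
    define B where "B = {i \<in> T. x \<in> b i}"
    have fA: "finite A" "finite B" using assms by (auto simp: A_def B_def)
    have e: "{i \<in> vadd S T. x \<in> b i} = (A - B) \<union> (B - A)" by (auto simp: A_def B_def)
    have c1: "card (A \<union> B) + card (A \<inter> B) = card A + card B" using fA card_Un_Int by metis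
    have c2: "card (A \<union> B) = card ((A - B) \<union> (B - A)) + card (A \<inter> B)"
    proof -
      have "A \<union> B = ((A - B) \<union> (B - A)) \<union> (A \<inter> B)" by auto
      moreover have "((A - B) \<union> (B - A)) \<inter> (A \<inter> B) = {}" by auto
      ultimately show ?thesis using fA by (metis card_Un_disjoint finite_Int finite_UnI finite_Diff)
    qed
    have "card A + card B = card ((A - B) \<union> (B - A)) + 2 * card (A \<inter> B)" using c1 c2 by simp
    then have "odd (card ((A - B) \<union> (B - A))) = odd (card A + card B)" by simp
    then have **: "odd (card ((A - B) \<union> (B - A))) = (odd (card A) \<longleftrightarrow> \<not> odd (card B))" by auto
    have "card {i \<in> vadd S T. x \<in> b i} = card ((A - B) \<union> (B - A))" by (rule arg_cong[OF e])
    then show ?thesis using ** by (simp only: A_def B_def)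
  qed
  then show ?thesis by (intro set_eqI) (simp add: lincomb_def)
qed

lemma lincomb_sub:
  assumes "\<And>i. i \<in> S \<Longrightarrow> b i \<subseteq> X"
  shows "lincomb b S \<subseteq> X"
proof
  fix x assume "x \<in> lincomb b S"
  then have "odd (card {i \<in> S. x \<in> b i})" by (simp add: lincomb_def)
  then have "{i \<in> S. x \<in> b i} \<noteq> {}" by (metis card.empty even_zero)
  then show "x \<in> X" using assms by blast
qed

lemma lincomb_cong:
  assumes "\<And>i. i \<in> S \<Longrightarrow> b i = b' i"
  shows "lincomb b S = lincomb b' S"
proof -
  have "{i \<in> S. x \<in> b i} = {i \<in> S. x \<in> b' i}" for x using assms by auto
  then show ?thesis by (simp add: lincomb_def)
qed

definition aff :: "nat \<Rightarrow> nat \<Rightarrow> nat set set \<Rightarrow> bool" where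
  "aff n r U \<longleftrightarrow> U \<subseteq> Vsp n \<and> U \<noteq> {} \<and> (\<forall>x\<in>U. \<forall>y\<in>U. \<forall>z\<in>U. vadd x (vadd y z) \<in> U)
     \<and> card U = 2 ^ r"

lemma finite_Vsp[simp]: "finite (Vsp n)" by (simp add: Vsp_def)
lemma card_Vsp: "card (Vsp n) = 2 ^ n" by (simp add: Vsp_def card_Pow)
lemma Vsp_finite_elem: "v \<in> Vsp n \<Longrightarrow> finite v"
  by (auto simp: Vsp_def intro: finite_subset)

lemma lincomb_in_closed:
  assumes "finite S" "{} \<in> D" "\<And>x y. x \<in> D \<Longrightarrow> y \<in> D \<Longrightarrow> vadd x y \<in> D"
    "\<And>i. i \<in> S \<Longrightarrow> b i \<in> D"
  shows "lincomb b S \<in> D"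
  using assms
proof (induction S rule: finite_induct)
  case empty then show ?case by simp
next
  case (insert k S)
  then show ?case by (simp add: lincomb_insert)
qed

lemma affine_sub_aff:
  assumes "affine_sub n r U" shows "aff n r U"
proof -
  obtain a b where a: "a \<in> Vsp n" and b: "\<forall>i<r. b i \<in> Vsp n"
    and inj: "inj_on (lincomb b) (Pow {..<r})"
    and U: "U = {vadd a (lincomb b S) | S. S \<subseteq> {..<r}}"
    using assms unfolding affine_sub_def by blast
  define f where "f S = vadd a (lincomb b S)" for S
  have U': "U = f ` Pow {..<r}" unfolding U f_def by auto
  have sub: "f S \<in> Vsp n" if "S \<subseteq> {..<r}" for S
  proof -
    have "lincomb b S \<subseteq> {..<n}"
      by (rule lincomb_sub) (use b that in \<open>auto simp: Vsp_def\<close>)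
    then show ?thesis using a unfolding f_def Vsp_def by (auto intro: vadd_sub)
  qed
  have closed: "vadd x (vadd y z) \<in> U" if xyzU: "x \<in> U" "y \<in> U" "z \<in> U" for x y z
  proof -
    obtain S T R where "S \<subseteq> {..<r}" "T \<subseteq> {..<r}" "R \<subseteq> {..<r}" and xyz: "x = f S" "y = f T" "z = f R"
      using xyzU U' by auto
    then have fin: "finite S" "finite T" "finite R" by (auto intro: finite_subset)
    have "vadd S (vadd T R) \<subseteq> {..<r}" using \<open>S \<subseteq> _\<close> \<open>T \<subseteq> _\<close> \<open>R \<subseteq> _\<close> by (auto intro!: vadd_sub)
    moreover have "f (vadd S (vadd T R)) = vadd x (vadd y z)"
      unfolding xyz f_def using fin
      by (simp add: lincomb_vadd vadd_finite) (rule set_eqI, auto)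
    ultimately show ?thesis using U' by (metis Pow_iff image_eqI)
  qed
  have injf: "inj_on f (Pow {..<r})"
    using inj unfolding inj_on_def f_def by (simp add: vadd_inj)
  have "card U = 2 ^ r" unfolding U' using injf by (simp add: card_image card_Pow)
  moreover have "U \<subseteq> Vsp n" using sub U' by auto
  moreover have "U \<noteq> {}" using U' by auto
  ultimately show ?thesis using closed unfolding aff_def by blast
qed

lemma span_exists:
  assumes finD: "finite D" and z: "{} \<in> D" and cl: "\<And>x y. x \<in> D \<Longrightarrow> y \<in> D \<Longrightarrow> vadd x y \<in> D"
  shows "\<exists>k b. (\<forall>i<k. b i \<in> D) \<and> inj_on (lincomb b) (Pow {..<k}) \<and> lincomb b ` Pow {..<k} = D"
proof -
  define K where "K = {k. \<exists>b. (\<forall>i<k. b i \<in> D) \<and> inj_on (lincomb b) (Pow {..<k})}"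
  have imgD: "lincomb b ` Pow {..<k} \<subseteq> D" if "\<forall>i<k. b i \<in> D" for b k
  proof
    fix x assume "x \<in> lincomb b ` Pow {..<k}"
    then obtain S where "S \<subseteq> {..<k}" "x = lincomb b S" by auto
    moreover have "finite S" using \<open>S \<subseteq> {..<k}\<close> finite_subset by blast
    ultimately show "x \<in> D" using lincomb_in_closed[of S D b] z cl that by blast
  qed
  have bound: "k \<le> card D" if "k \<in> K" for k
  proof -
    obtain b where b: "\<forall>i<k. b i \<in> D" "inj_on (lincomb b) (Pow {..<k})" using \<open>k \<in> K\<close> K_def by auto
    have "card (Pow {..<k}) \<le> card D"
      using card_inj_on_le[OF b(2) imgD[OF b(1)] finD] .
    then have "2 ^ k \<le> card D" by (simp add: card_Pow)
    moreover have "k < 2 ^ k" by (rule less_exp)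
    ultimately show ?thesis by linarith
  qed
  have "0 \<in> K" unfolding K_def by auto
  have finK: "finite K" using bound by (meson finite_nat_set_iff_bounded_le)
  define k where "k = Max K"
  have "k \<in> K" unfolding k_def using finK \<open>0 \<in> K\<close> by (metis Max_in empty_iff)
  then obtain b where b: "\<forall>i<k. b i \<in> D" "inj_on (lincomb b) (Pow {..<k})" using K_def by auto
  have "lincomb b ` Pow {..<k} = D"
  proof (rule ccontr)
    assume "lincomb b ` Pow {..<k} \<noteq> D"
    then obtain d where d: "d \<in> D" "d \<notin> lincomb b ` Pow {..<k}" using imgD[OF b(1)] by blast
    define b' where "b' = b(k := d)"
    have L': "lincomb b' S = (if k \<in> S then vadd d (lincomb b (S - {k})) else lincomb b S)"
      if "S \<subseteq> {..<Suc k}" for S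
    proof -
      have eq: "lincomb b' (S - {k}) = lincomb b (S - {k})"
        by (rule lincomb_cong) (auto simp: b'_def)
      have fin: "finite (S - {k})" using that by (meson finite_Diff finite_lessThan finite_subset)
      show ?thesis
      proof (cases "k \<in> S")
        case True
        then have "S = insert k (S - {k})" by auto
        then have "lincomb b' S = vadd (b' k) (lincomb b' (S - {k}))"
          using lincomb_insert[OF fin, of k b'] by simp
        then show ?thesis using True eq by (simp add: b'_def)
      next
        case False
        then show ?thesis using eq by simp
      qed
    qed
    have sub: "S - {k} \<subseteq> {..<k}" if "S \<subseteq> {..<Suc k}" for S using that by auto
    have finS: "finite S" if "S \<subseteq> {..<Suc k}" for S using that by (meson finite_lessThan finite_subset)
    have mixed: False if "S \<subseteq> {..<Suc k}" "T \<subseteq> {..<Suc k}" "k \<in> S" "k \<notin> T"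
      "vadd d (lincomb b (S - {k})) = lincomb b T" for S T
    proof -
      have "d = vadd (lincomb b (S - {k})) (lincomb b T)" using that(5)
        by (metis vadd_assoc vadd_cancel(1) vadd_comm)
      also have "\<dots> = lincomb b (vadd (S - {k}) T)"
        using finS[OF that(1)] finS[OF that(2)] by (simp add: lincomb_vadd)
      moreover have "T \<subseteq> {..<k}" using that(2,4) by (auto simp: less_Suc_eq)
      then have "vadd (S - {k}) T \<in> Pow {..<k}" using sub[OF that(1)] by (simp add: vadd_sub)
      ultimately have "d \<in> lincomb b ` Pow {..<k}" by blast
      then show False using d by simp
    qed
    have "inj_on (lincomb b') (Pow {..<Suc k})"
    proof (rule inj_onI)
      fix S T assume S: "S \<in> Pow {..<Suc k}" and T: "T \<in> Pow {..<Suc k}"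
        and eq: "lincomb b' S = lincomb b' T"
      have S': "S \<subseteq> {..<Suc k}" and T': "T \<subseteq> {..<Suc k}" using S T by auto
      consider "k \<in> S" "k \<in> T" | "k \<in> S" "k \<notin> T" | "k \<notin> S" "k \<in> T" | "k \<notin> S" "k \<notin> T" by blast
      then show "S = T"
      proof cases
        case 1
        then have "lincomb b (S - {k}) = lincomb b (T - {k})"
          using eq L'[OF S'] L'[OF T'] by (simp add: vadd_inj)
        then have "S - {k} = T - {k}" using b(2) sub[OF S'] sub[OF T'] by (auto dest: inj_onD)
        then show ?thesis using 1 by blast
      next
        case 2 then show ?thesis using mixed[OF S' T'] eq L'[OF S'] L'[OF T'] by simp
      next
        case 3 then show ?thesis using mixed[OF T' S'] eq L'[OF S'] L'[OF T'] by simp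
      next
        case 4
        then have "lincomb b S = lincomb b T" using eq L'[OF S'] L'[OF T'] by simp
        moreover have "S \<subseteq> {..<k}" "T \<subseteq> {..<k}" using 4 S' T' sub by auto
        ultimately show ?thesis using b(2) by (auto dest: inj_onD)
      qed
    qed
    moreover have "\<forall>i<Suc k. b' i \<in> D" using b(1) d(1) by (auto simp: b'_def less_Suc_eq)
    ultimately have "Suc k \<in> K" unfolding K_def by blast
    then have "Suc k \<le> k" unfolding k_def using finK by simp
    then show False by simp
  qed
  then show ?thesis using b by blast
qed

lemma aff_affine_sub:
  assumes "aff n r U" shows "affine_sub n r U"
proof -
  have U: "U \<subseteq> Vsp n" "U \<noteq> {}" "\<And>x y z. x \<in> U \<Longrightarrow> y \<in> U \<Longrightarrow> z \<in> U \<Longrightarrow> vadd x (vadd y z) \<in> U"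
    "card U = 2 ^ r" using assms unfolding aff_def by auto
  obtain a where a: "a \<in> U" using U(2) by auto
  define D where "D = vadd a ` U"
  have finD: "finite D" unfolding D_def using U(1) finite_Vsp finite_subset by blast
  have zD: "{} \<in> D" unfolding D_def using a by (metis image_eqI vadd_self)
  have clD: "vadd x y \<in> D" if xyD: "x \<in> D" "y \<in> D" for x y
  proof -
    obtain u v where uv: "u \<in> U" "v \<in> U" "x = vadd a u" "y = vadd a v" using xyD D_def by auto
    have "vadd x y = vadd a (vadd u (vadd a v))" unfolding uv by (rule set_eqI) auto
    then show ?thesis unfolding D_def using U(3)[OF uv(1) a uv(2)] by auto
  qed
  obtain k b where kb: "\<forall>i<k. b i \<in> D" "inj_on (lincomb b) (Pow {..<k})" "lincomb b ` Pow {..<k} = D"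
    using span_exists[OF finD zD clD] by blast
  have injA: "inj_on (vadd a) U" by (simp add: inj_on_def vadd_inj)
  have "card D = 2 ^ r" unfolding D_def using card_image[OF injA] U(4) by simp
  moreover have "card D = 2 ^ k" using kb(3) card_image[OF kb(2)] by (simp add: card_Pow)
  ultimately have "k = r" by simp
  have aV: "a \<in> Vsp n" using a U(1) by auto
  have DV: "D \<subseteq> Vsp n"
  proof
    fix x assume "x \<in> D"
    then obtain u where "u \<in> U" "x = vadd a u" using D_def by auto
    moreover have "u \<subseteq> {..<n}" "a \<subseteq> {..<n}" using \<open>u \<in> U\<close> aV U(1) by (auto simp: Vsp_def)
    ultimately show "x \<in> Vsp n" by (simp add: Vsp_def vadd_sub)
  qed
  have "U = vadd a ` D" unfolding D_def by (simp add: image_image)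
  also have "\<dots> = {vadd a (lincomb b S) | S. S \<subseteq> {..<r}}" using kb(3) \<open>k = r\<close> by auto
  finally show ?thesis unfolding affine_sub_def using aV kb(1,2) DV \<open>k = r\<close> by blast
qed

lemma affine_sub_iff: "affine_sub n r U \<longleftrightarrow> aff n r U"
  using affine_sub_aff aff_affine_sub by blast

lemmas vadd_ac = vadd_assoc vadd_comm vadd_left_commute

lemma zspan_gen: "g \<in> G \<Longrightarrow> g \<in> zspan G"
  unfolding zspan_def by (rule CollectI, rule exI[of _ "{g}"], rule exI[of _ "\<lambda>_. 1"]) auto

lemma zspan_zero: "(\<lambda>v. 0) \<in> zspan G"
  unfolding zspan_def by (rule CollectI, rule exI[of _ "{}"]) auto

lemma zspan_smult: "x \<in> zspan G \<Longrightarrow> (\<lambda>v. k * x v) \<in> zspan G"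
proof -
  assume "x \<in> zspan G"
  then obtain F c where "finite F" "F \<subseteq> G" "x = (\<lambda>v. \<Sum>g\<in>F. c g * g v)" unfolding zspan_def by blast
  then show ?thesis unfolding zspan_def
    by (intro CollectI exI[of _ F] exI[of _ "\<lambda>g. k * c g"]) (simp add: sum_distrib_left mult.assoc)
qed

lemma zspan_add: "x \<in> zspan G \<Longrightarrow> y \<in> zspan G \<Longrightarrow> (\<lambda>v. x v + y v) \<in> zspan G"
proof -
  assume "x \<in> zspan G" "y \<in> zspan G"
  then obtain F1 c1 F2 c2 where F: "finite F1" "F1 \<subseteq> G" "x = (\<lambda>v. \<Sum>g\<in>F1. c1 g * g v)"
    "finite F2" "F2 \<subseteq> G" "y = (\<lambda>v. \<Sum>g\<in>F2. c2 g * g v)" unfolding zspan_def by blast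
  define c where "c g = (if g \<in> F1 then c1 g else 0) + (if g \<in> F2 then c2 g else 0)" for g
  have "(\<Sum>g\<in>F1 \<union> F2. c g * g v) = x v + y v" for v
  proof -
    have "(\<Sum>g\<in>F1 \<union> F2. c g * g v) = (\<Sum>g\<in>F1 \<union> F2. (if g \<in> F1 then c1 g * g v else 0))
        + (\<Sum>g\<in>F1 \<union> F2. (if g \<in> F2 then c2 g * g v else 0))"
      unfolding c_def sum.distrib[symmetric] by (intro sum.cong refl) (auto simp: distrib_right)
    also have "(\<Sum>g\<in>F1 \<union> F2. (if g \<in> F1 then c1 g * g v else 0)) = (\<Sum>g\<in>F1. c1 g * g v)"
    proof -
      have "(F1 \<union> F2) \<inter> F1 = F1" by auto
      then show ?thesis using sum.inter_restrict[of "F1 \<union> F2" "\<lambda>g. c1 g * g v" F1] F(1,4)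
        by (metis finite_Un)
    qed
    also have "(\<Sum>g\<in>F1 \<union> F2. (if g \<in> F2 then c2 g * g v else 0)) = (\<Sum>g\<in>F2. c2 g * g v)"
    proof -
      have "(F1 \<union> F2) \<inter> F2 = F2" by auto
      then show ?thesis using sum.inter_restrict[of "F1 \<union> F2" "\<lambda>g. c2 g * g v" F2] F(1,4)
        by (metis finite_Un)
    qed
    finally show ?thesis using F by simp
  qed
  then show ?thesis unfolding zspan_def using F
    by (intro CollectI exI[of _ "F1 \<union> F2"] exI[of _ c]) auto
qed

lemma zspan_least:
  assumes "(\<lambda>v. 0) \<in> S" "\<And>x y. x \<in> S \<Longrightarrow> y \<in> S \<Longrightarrow> (\<lambda>v. x v + y v) \<in> S"
    "\<And>x k. x \<in> S \<Longrightarrow> (\<lambda>v. k * x v) \<in> S" "G \<subseteq> S"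
  shows "zspan G \<subseteq> S"
proof
  fix x assume "x \<in> zspan G"
  then obtain F c where F: "finite F" "F \<subseteq> G" "x = (\<lambda>v. \<Sum>g\<in>F. c g * g v)" unfolding zspan_def by blast
  have "F \<subseteq> G \<Longrightarrow> (\<lambda>v. \<Sum>g\<in>F. c g * g v) \<in> S" using F(1)
  proof (induction F rule: finite_induct)
    case empty then show ?case using assms(1) by simp
  next
    case (insert a F)
    then have "(\<lambda>v. c a * a v) \<in> S" "(\<lambda>v. \<Sum>g\<in>F. c g * g v) \<in> S" using assms by auto
    then have "(\<lambda>v. c a * a v + (\<Sum>g\<in>F. c g * g v)) \<in> S" using assms(2) by blast
    then show ?case using insert by simp
  qed
  then show "x \<in> S" using F by simp
qed

definition mapv :: "(nat set \<Rightarrow> nat set) \<Rightarrow> nat \<Rightarrow> (nat set \<Rightarrow> int) \<Rightarrow> (nat set \<Rightarrow> int)" where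
  "mapv f m x = (\<lambda>w. \<Sum>v\<in>Vsp m. if f v = w then x v else 0)"

lemma mapv_add: "mapv f m (\<lambda>v. x v + y v) = (\<lambda>w. mapv f m x w + mapv f m y w)"
  unfolding mapv_def by (rule ext) (simp add: sum.distrib[symmetric] if_distrib cong: if_cong)

lemma mapv_add': "mapv f m (\<lambda>v. x v + y v) w = mapv f m x w + mapv f m y w"
  by (simp add: mapv_add)

lemma mapv_smult: "mapv f m (\<lambda>v. k * x v) = (\<lambda>w. k * mapv f m x w)"
  unfolding mapv_def by (rule ext) (simp add: sum_distrib_left if_distrib cong: if_cong)

lemma mapv_zero: "mapv f m (\<lambda>v. 0) = (\<lambda>w. 0)"
  unfolding mapv_def by simp

lemma mapv_xvec:
  assumes inj: "inj_on f (Vsp m)" and A: "A \<subseteq> Vsp m"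
  shows "mapv f m (\<lambda>v. c * xvec A v) = (\<lambda>w. c * xvec (f ` A) w)"
proof
  fix w
  show "mapv f m (\<lambda>v. c * xvec A v) w = c * xvec (f ` A) w"
  proof (cases "w \<in> f ` Vsp m")
    case True
    then obtain v0 where v0: "v0 \<in> Vsp m" "w = f v0" by auto
    have "mapv f m (\<lambda>v. c * xvec A v) w = (\<Sum>v\<in>Vsp m. if v = v0 then c * xvec A v else 0)"
      unfolding mapv_def using inj v0 by (intro sum.cong refl) (auto dest: inj_onD)
    also have "\<dots> = c * xvec A v0" using v0 by simp
    also have "\<dots> = c * xvec (f ` A) w"
      using v0 A inj by (simp add: xvec_def inj_on_image_mem_iff)
    finally show ?thesis .
  next
    case False
    then have "mapv f m (\<lambda>v. c * xvec A v) w = 0" unfolding mapv_def by (auto intro!: sum.neutral)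
    moreover have "w \<notin> f ` A" using False A by auto
    ultimately show ?thesis by (simp add: xvec_def)
  qed
qed

lemma aff_le: "aff n r U \<Longrightarrow> r \<le> n"
proof -
  assume "aff n r U"
  then have "U \<subseteq> Vsp n" "card U = 2 ^ r" by (auto simp: aff_def)
  then have "2 ^ r \<le> (2::nat) ^ n" using card_mono[OF finite_Vsp] card_Vsp by metis
  then show ?thesis by simp
qed

lemma gen_Lam:
  assumes "aff n r U" "(n - r) div 2 \<le> e"
  shows "(\<lambda>v. 2 ^ e * xvec U v) \<in> Lam n"
proof -
  have "(\<lambda>v. 2 ^ ((n - r) div 2) * xvec U v) \<in> Lam n"
    unfolding Lam_def using assms aff_le[OF assms(1)] affine_sub_iff
    by (intro zspan_gen) blast
  then have "(\<lambda>v. 2 ^ (e - (n - r) div 2) * (2 ^ ((n - r) div 2) * xvec U v)) \<in> Lam n"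
    unfolding Lam_def by (rule zspan_smult)
  moreover have "(2::int) ^ (e - (n - r) div 2) * 2 ^ ((n - r) div 2) = 2 ^ e"
    using assms(2) by (simp add: power_add[symmetric])
  ultimately show ?thesis by (simp add: mult.assoc[symmetric])
qed

lemma gen_Del:
  assumes "aff n r U" "(n - r + 1) div 2 \<le> e"
  shows "(\<lambda>v. 2 ^ e * xvec U v) \<in> Del n"
proof -
  have "(\<lambda>v. 2 ^ ((n - r + 1) div 2) * xvec U v) \<in> Del n"
    unfolding Del_def using assms aff_le[OF assms(1)] affine_sub_iff
    by (intro zspan_gen) blast
  then have "(\<lambda>v. 2 ^ (e - (n - r + 1) div 2) * (2 ^ ((n - r + 1) div 2) * xvec U v)) \<in> Del n"
    unfolding Del_def by (rule zspan_smult)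
  moreover have "(2::int) ^ (e - (n - r + 1) div 2) * 2 ^ ((n - r + 1) div 2) = 2 ^ e"
    using assms(2) by (simp add: power_add[symmetric])
  ultimately show ?thesis by (simp add: mult.assoc[symmetric])
qed

lemma ar1: "r \<le> m \<Longrightarrow> (m - r + 1) div 2 \<le> (Suc m - r) div 2" by presburger
lemma ar2: "(m - r) div 2 \<le> (Suc m - r) div 2" by presburger
lemma ar3: "1 \<le> r \<Longrightarrow> (m - (r - 1)) div 2 \<le> (Suc m - r) div 2" by presburger
lemma ar4: "1 \<le> r \<Longrightarrow> r \<le> Suc m \<Longrightarrow> (m - (r - 1) + 1) div 2 \<le> Suc ((Suc m - r) div 2)" by presburger
lemma ar5: "(Suc m - Suc r) div 2 \<le> (m - r) div 2" by presburger

lemma xvec_Un: "A \<inter> B = {} \<Longrightarrow> xvec (A \<union> B) v = xvec A v + xvec B v"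
  by (auto simp: xvec_def)

lemma Vsp_el: "A \<subseteq> Vsp m \<Longrightarrow> x \<in> A \<Longrightarrow> i \<in> x \<Longrightarrow> i < m"
proof -
  assume "A \<subseteq> Vsp m" "x \<in> A" "i \<in> x"
  then have "x \<subseteq> {..<m}" unfolding Vsp_def by blast
  then show "i < m" using \<open>i \<in> x\<close> by auto
qed

lemma Vsp_mono: "Vsp m \<subseteq> Vsp (Suc m)" unfolding Vsp_def by (intro Pow_mono) auto

lemma aff_Suc: "aff m r A \<Longrightarrow> aff (Suc m) r A"
  unfolding aff_def using Vsp_mono by blast

lemma aff_double:
  assumes "aff m r A" shows "aff (Suc m) (Suc r) (A \<union> insert m ` A)"
proof -
  have A: "A \<subseteq> Vsp m" "A \<noteq> {}" "\<And>x y z. x \<in> A \<Longrightarrow> y \<in> A \<Longrightarrow> z \<in> A \<Longrightarrow> vadd x (vadd y z) \<in> A"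
    "card A = 2 ^ r" using assms unfolding aff_def by auto
  have mA: "m \<notin> x" if "x \<in> A" for x using that Vsp_el[OF A(1)] by blast
  have char: "x \<in> A \<union> insert m ` A \<longleftrightarrow> x - {m} \<in> A \<and> x \<subseteq> {..<Suc m}" for x
  proof
    assume "x \<in> A \<union> insert m ` A"
    then show "x - {m} \<in> A \<and> x \<subseteq> {..<Suc m}" using Vsp_el[OF A(1)] mA by (auto simp: less_Suc_eq)
  next
    assume h: "x - {m} \<in> A \<and> x \<subseteq> {..<Suc m}"
    show "x \<in> A \<union> insert m ` A"
    proof (cases "m \<in> x")
      case True
      then have "x = insert m (x - {m})" by auto
      then show ?thesis using h by blast
    next
      case False
      then show ?thesis using h by simp
    qed
  qed
  have sub: "A \<union> insert m ` A \<subseteq> Vsp (Suc m)" using char by (auto simp: Vsp_def)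
  have cl: "vadd x (vadd y z) \<in> A \<union> insert m ` A" if "x \<in> A \<union> insert m ` A" "y \<in> A \<union> insert m ` A"
    "z \<in> A \<union> insert m ` A" for x y z
  proof -
    have "vadd x (vadd y z) - {m} = vadd (x - {m}) (vadd (y - {m}) (z - {m}))" by auto
    moreover have "vadd x (vadd y z) \<subseteq> {..<Suc m}" using that char by (auto intro!: vadd_sub)
    ultimately show ?thesis using that char A(3) by simp
  qed
  have injI: "inj_on (insert m) A" using mA by (intro inj_onI) (metis insert_ident)
  have "card (A \<union> insert m ` A) = card A + card (insert m ` A)"
  proof (rule card_Un_disjoint)
    show "finite A" using A(1) finite_Vsp finite_subset by blast
    then show "finite (insert m ` A)" by simp
    show "A \<inter> insert m ` A = {}" using mA by auto
  qed
  also have "\<dots> = 2 ^ Suc r" using card_image[OF injI] A(4) by simp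
  finally show ?thesis unfolding aff_def using sub cl A(2) by auto
qed

context
  fixes m :: nat and b :: "nat \<Rightarrow> nat set"
  assumes injL: "inj_on (lincomb b) (Pow {..<Suc m})"
    and imgL: "lincomb b ` Pow {..<Suc m} = Vsp (Suc m)"
begin

lemma Vsp_sub: "Vsp m \<subseteq> Pow {..<Suc m}" by (auto simp: Vsp_def)

lemma tau_eq: "v \<in> Vsp m \<Longrightarrow> tau_v b m v = lincomb b (insert m v)"
proof -
  assume v: "v \<in> Vsp m"
  then have "finite v" "m \<notin> v" by (auto simp: Vsp_def intro: finite_subset)
  then show ?thesis by (simp add: tau_v_def lincomb_insert)
qed

lemma inj_iota: "inj_on (iota_v b) (Vsp m)"
  unfolding iota_v_def[abs_def] using injL Vsp_sub by (rule inj_on_subset)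

lemma inj_tau: "inj_on (tau_v b m) (Vsp m)"
proof (rule inj_onI)
  fix x y assume xy: "x \<in> Vsp m" "y \<in> Vsp m" "tau_v b m x = tau_v b m y"
  then have e: "lincomb b (insert m x) = lincomb b (insert m y)" by (simp add: tau_eq)
  have mem: "insert m x \<in> Pow {..<Suc m}" "insert m y \<in> Pow {..<Suc m}"
    using Vsp_el[OF subset_refl, of _ m] xy by (auto simp: less_Suc_eq)
  have "insert m x = insert m y" by (rule inj_onD[OF injL e mem])
  moreover have "m \<notin> x" "m \<notin> y" using Vsp_el[OF subset_refl, of _ m] xy by blast+
  ultimately show "x = y" by (metis insert_ident)
qed

lemma disj_it: "A \<subseteq> Vsp m \<Longrightarrow> B \<subseteq> Vsp m \<Longrightarrow> iota_v b ` A \<inter> tau_v b m ` B = {}"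
proof (rule ccontr)
  assume AB: "A \<subseteq> Vsp m" "B \<subseteq> Vsp m" "iota_v b ` A \<inter> tau_v b m ` B \<noteq> {}"
  then obtain x y where xy: "x \<in> A" "y \<in> B" "lincomb b x = lincomb b (insert m y)"
    by (auto simp: iota_v_def tau_eq subsetD)
  have mem: "x \<in> Pow {..<Suc m}" "insert m y \<in> Pow {..<Suc m}" using xy Vsp_el[OF AB(1)] Vsp_el[OF AB(2)]
    by (auto simp: less_Suc_eq)
  have "x = insert m y" by (rule inj_onD[OF injL xy(3) mem])
  moreover have "m \<notin> x" using xy Vsp_el[OF AB(1)] by blast
  ultimately show False by simp
qed

lemma aff_imgL:
  assumes A: "A \<subseteq> Pow {..<Suc m}" and aff: "aff (Suc m) r A"
  shows "aff (Suc m) r (lincomb b ` A)"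
proof -
  have A': "A \<noteq> {}" "\<And>x y z. x \<in> A \<Longrightarrow> y \<in> A \<Longrightarrow> z \<in> A \<Longrightarrow> vadd x (vadd y z) \<in> A"
    "card A = 2 ^ r" using aff unfolding aff_def by auto
  have fin: "finite x" if "x \<in> A" for x using that A by (auto intro: finite_subset)
  have cl: "vadd x (vadd y z) \<in> lincomb b ` A" if xyz: "x \<in> lincomb b ` A" "y \<in> lincomb b ` A" "z \<in> lincomb b ` A" for x y z
  proof -
    obtain x' y' z' where "x' \<in> A" "y' \<in> A" "z' \<in> A" "x = lincomb b x'" "y = lincomb b y'" "z = lincomb b z'"
      using xyz by auto
    moreover have "lincomb b (vadd x' (vadd y' z')) = vadd (lincomb b x') (vadd (lincomb b y') (lincomb b z'))"
      using fin calculation by (simp add: lincomb_vadd vadd_finite)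
    ultimately show ?thesis using A'(2) by (metis image_eqI)
  qed
  have "card (lincomb b ` A) = 2 ^ r" using card_image[OF inj_on_subset[OF injL A]] A'(3) by simp
  moreover have "lincomb b ` A \<subseteq> Vsp (Suc m)" using imgL A by auto
  ultimately show ?thesis unfolding aff_def using cl A'(1) by auto
qed

lemma aff_iota: "aff m r A \<Longrightarrow> aff (Suc m) r (iota_v b ` A)"
proof -
  assume a: "aff m r A"
  then have "A \<subseteq> Pow {..<Suc m}" using Vsp_sub by (auto simp: aff_def)
  then show ?thesis unfolding iota_v_def[abs_def] using aff_imgL aff_Suc[OF a] by blast
qed

lemma aff_double_img:
  assumes "aff m r A" shows "aff (Suc m) (Suc r) (iota_v b ` A \<union> tau_v b m ` A)"
proof -
  have AV: "A \<subseteq> Vsp m" using assms by (simp add: aff_def)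
  have "iota_v b ` A \<union> tau_v b m ` A = lincomb b ` (A \<union> insert m ` A)"
    using AV by (auto simp: iota_v_def tau_eq image_Un image_image subsetD)
  moreover have "A \<union> insert m ` A \<subseteq> Pow {..<Suc m}" using Vsp_el[OF AV] by (auto simp: less_Suc_eq)
  ultimately show ?thesis using aff_imgL aff_double[OF assms] by simp
qed

end

context
  fixes m :: nat and b :: "nat \<Rightarrow> nat set"
  assumes injL: "inj_on (lincomb b) (Pow {..<Suc m})"
    and imgL: "lincomb b ` Pow {..<Suc m} = Vsp (Suc m)"
begin

lemma decomp:
  assumes U: "aff (Suc m) r U"
  obtains P0 P1 where "P0 \<subseteq> Vsp m" "P1 \<subseteq> Vsp m" "U = iota_v b ` P0 \<union> tau_v b m ` P1"
    "(P1 = {} \<and> aff m r P0) \<or> (P0 = {} \<and> aff m r P1) \<or>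
     (1 \<le> r \<and> aff m (r - 1) P0 \<and> aff m (r - 1) P1 \<and> (P0 = P1 \<or> (P0 \<inter> P1 = {} \<and> aff m r (P0 \<union> P1))))"
proof -
  have U1: "U \<subseteq> Vsp (Suc m)" "U \<noteq> {}" "\<And>x y z. x\<in>U \<Longrightarrow> y\<in>U \<Longrightarrow> z\<in>U \<Longrightarrow> vadd x (vadd y z) \<in> U"
    "card U = 2^r" using U unfolding aff_def by auto
  define P where "P = {p \<in> Pow {..<Suc m}. lincomb b p \<in> U}"
  have LP: "lincomb b ` P = U"
  proof
    show "lincomb b ` P \<subseteq> U" unfolding P_def by auto
    show "U \<subseteq> lincomb b ` P"
    proof
      fix u assume "u \<in> U"
      then have "u \<in> lincomb b ` Pow {..<Suc m}" using U1(1) imgL by auto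
      then obtain p where "p \<in> Pow {..<Suc m}" "u = lincomb b p" by auto
      then show "u \<in> lincomb b ` P" using \<open>u \<in> U\<close> unfolding P_def by auto
    qed
  qed
  have PP: "P \<subseteq> Pow {..<Suc m}" unfolding P_def by auto
  have injP: "inj_on (lincomb b) P" using injL PP by (rule inj_on_subset)
  have finP: "finite P" using PP finite_subset by blast
  have cardP: "card P = 2^r" using card_image[OF injP] LP U1(4) by simp
  have finel: "finite p" if "p \<in> P" for p using that PP finite_subset by blast
  have clP: "vadd x (vadd y z) \<in> P" if xyz: "x\<in>P" "y\<in>P" "z\<in>P" for x y z
  proof -
    have "lincomb b (vadd x (vadd y z)) = vadd (lincomb b x) (vadd (lincomb b y) (lincomb b z))"
      using finel[OF xyz(1)] finel[OF xyz(2)] finel[OF xyz(3)] by (simp add: lincomb_vadd vadd_finite)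
    also have "\<dots> \<in> U" using U1(3) xyz unfolding P_def by auto
    finally show ?thesis using xyz PP unfolding P_def by (auto intro!: vadd_sub)
  qed
  define P0 where "P0 = {p \<in> P. m \<notin> p}"
  define P1 where "P1 = {v. m \<notin> v \<and> insert m v \<in> P}"
  have P0V: "P0 \<subseteq> Vsp m"
  proof
    fix p assume "p \<in> P0"
    then have "p \<subseteq> {..<Suc m}" "m \<notin> p" unfolding P0_def P_def by auto
    then have "p \<subseteq> {..<m}" by (auto simp: less_Suc_eq)
    then show "p \<in> Vsp m" by (simp add: Vsp_def)
  qed
  have P1V: "P1 \<subseteq> Vsp m"
  proof
    fix p assume "p \<in> P1"
    then have "insert m p \<subseteq> {..<Suc m}" "m \<notin> p" unfolding P1_def P_def by auto
    then have "p \<subseteq> {..<m}" by (auto simp: less_Suc_eq)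
    then show "p \<in> Vsp m" by (simp add: Vsp_def)
  qed
  have m0: "m \<notin> x" if "x \<in> P0" for x using that P0_def by auto
  have m1: "m \<notin> x" if "x \<in> P1" for x using that P1_def by auto
  have Peq: "P = P0 \<union> insert m ` P1"
  proof
    show "P \<subseteq> P0 \<union> insert m ` P1"
    proof
      fix x assume x: "x \<in> P"
      show "x \<in> P0 \<union> insert m ` P1"
      proof (cases "m \<in> x")
        case True
        then have "x = insert m (x - {m})" by auto
        moreover have "x - {m} \<in> P1" using x True unfolding P1_def by (simp add: insert_absorb)
        ultimately show ?thesis by blast
      next
        case False then show ?thesis using x P0_def by auto
      qed
    qed
    show "P0 \<union> insert m ` P1 \<subseteq> P" unfolding P0_def P1_def by auto
  qed
  have disj: "P0 \<inter> insert m ` P1 = {}" unfolding P0_def by auto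
  have finP0: "finite P0" "finite P1" using P0V P1V finite_Vsp finite_subset by blast+
  have injI: "inj_on (insert m) P1" using m1 by (intro inj_onI) (metis insert_ident)
  have cardP': "card P = card P0 + card P1"
    unfolding Peq using card_Un_disjoint[OF finP0(1) _ disj] finP0(2) card_image[OF injI] by simp
  have Ueq: "U = iota_v b ` P0 \<union> tau_v b m ` P1"
  proof -
    have "U = lincomb b ` P0 \<union> lincomb b ` (insert m ` P1)" using LP Peq by auto
    moreover have "tau_v b m ` P1 = lincomb b ` (insert m ` P1)"
      using P1V tau_eq[OF injL imgL] by (auto simp: image_image subsetD)
    ultimately show ?thesis by (simp add: iota_v_def[abs_def])
  qed
  have c000: "vadd x (vadd y z) \<in> P0" if "x \<in> P0" "y \<in> P0" "z \<in> P0" for x y z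
    using that clP unfolding P0_def by auto
  have c001: "vadd x (vadd y z) \<in> P1" if xyz: "x \<in> P0" "y \<in> P0" "z \<in> P1" for x y z
  proof -
    have "insert m (vadd x (vadd y z)) = vadd x (vadd y (insert m z))"
      using m0[OF xyz(1)] m0[OF xyz(2)] m1[OF xyz(3)] by auto
    moreover have "vadd x (vadd y (insert m z)) \<in> P" using clP xyz unfolding P0_def P1_def by auto
    moreover have "m \<notin> vadd x (vadd y z)" using m0[OF xyz(1)] m0[OF xyz(2)] m1[OF xyz(3)] by auto
    ultimately show ?thesis unfolding P1_def by simp
  qed
  have c011: "vadd x (vadd y z) \<in> P0" if xyz: "x \<in> P0" "y \<in> P1" "z \<in> P1" for x y z
  proof -
    have "vadd x (vadd y z) = vadd x (vadd (insert m y) (insert m z))"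
      using m0[OF xyz(1)] m1[OF xyz(2)] m1[OF xyz(3)] by auto
    moreover have "vadd x (vadd (insert m y) (insert m z)) \<in> P" using clP xyz unfolding P0_def P1_def by auto
    moreover have "m \<notin> vadd x (vadd y z)" using m0[OF xyz(1)] m1[OF xyz(2)] m1[OF xyz(3)] by auto
    ultimately show ?thesis unfolding P0_def by simp
  qed
  have c111: "vadd x (vadd y z) \<in> P1" if xyz: "x \<in> P1" "y \<in> P1" "z \<in> P1" for x y z
  proof -
    have "insert m (vadd x (vadd y z)) = vadd (insert m x) (vadd (insert m y) (insert m z))"
      using m1[OF xyz(1)] m1[OF xyz(2)] m1[OF xyz(3)] by auto
    moreover have "vadd (insert m x) (vadd (insert m y) (insert m z)) \<in> P" using clP xyz unfolding P1_def by auto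
    moreover have "m \<notin> vadd x (vadd y z)" using m1[OF xyz(1)] m1[OF xyz(2)] m1[OF xyz(3)] by auto
    ultimately show ?thesis unfolding P1_def by simp
  qed
  have Pne: "P \<noteq> {}" using cardP by auto
  have main: "(P1 = {} \<and> aff m r P0) \<or> (P0 = {} \<and> aff m r P1) \<or>
     (1 \<le> r \<and> aff m (r - 1) P0 \<and> aff m (r - 1) P1 \<and> (P0 = P1 \<or> (P0 \<inter> P1 = {} \<and> aff m r (P0 \<union> P1))))"
  proof (cases "P1 = {}")
    case True
    then have "card P0 = 2 ^ r" "P0 \<noteq> {}" using cardP' cardP Pne Peq by auto
    then have "aff m r P0" unfolding aff_def using P0V c000 by blast
    then show ?thesis using True by blast
  next
    case F1: False
    show ?thesis
    proof (cases "P0 = {}")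
      case True
      then have "card P1 = 2 ^ r" using cardP' cardP by auto
      then have "aff m r P1" unfolding aff_def using P1V c111 F1 by blast
      then show ?thesis using True by blast
    next
      case F0: False
      obtain p0 q where pq: "p0 \<in> P0" "q \<in> P1" using F0 F1 by blast
      define h where "h x = vadd x (vadd p0 q)" for x
      have h01: "h x \<in> P1" if "x \<in> P0" for x unfolding h_def using c001[OF that pq] .
      have h10: "h y \<in> P0" if "y \<in> P1" for y
      proof -
        have "h y = vadd p0 (vadd y q)" unfolding h_def by (simp add: vadd_ac)
        then show ?thesis using c011[OF pq(1) that pq(2)] by simp
      qed
      have injh: "inj_on h S" for S unfolding h_def
        by (rule inj_onI) (metis vadd_comm vadd_inj)
      have "card P0 \<le> card P1" using card_inj_on_le[OF injh _ finP0(2)] h01 by blast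
      moreover have "card P1 \<le> card P0" using card_inj_on_le[OF injh _ finP0(1)] h10 by blast
      ultimately have ceq: "card P0 = card P1" by simp
      then have "2 ^ r = 2 * card P0" using cardP cardP' by simp
      then have r1: "1 \<le> r" by (metis One_nat_def Suc_leI even_mult_iff even_numeral gr0I odd_one power_0)
      then have "2 ^ r = 2 * (2::nat) ^ (r - 1)" by (metis One_nat_def Suc_diff_le diff_Suc_1 power_Suc)
      with \<open>2 ^ r = 2 * card P0\<close> have c0: "card P0 = 2 ^ (r - 1)" by simp
      have a0: "aff m (r - 1) P0" unfolding aff_def using P0V F0 c000 c0 by blast
      have a1: "aff m (r - 1) P1" unfolding aff_def using P1V F1 c111 c0 ceq by auto
      have "P0 = P1 \<or> (P0 \<inter> P1 = {} \<and> aff m r (P0 \<union> P1))"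
      proof (cases "P0 \<inter> P1 = {}")
        case False
        then obtain x where x: "x \<in> P0" "x \<in> P1" by blast
        have "P0 \<subseteq> P1"
        proof
          fix y assume "y \<in> P0"
          then have "vadd y (vadd x x) \<in> P1" using c001 x by blast
          then show "y \<in> P1" by simp
        qed
        moreover have "P1 \<subseteq> P0"
        proof
          fix z assume "z \<in> P1"
          then have "vadd x (vadd x z) \<in> P0" using c011 x by blast
          then show "z \<in> P0" by simp
        qed
        ultimately show ?thesis by blast
      next
        case True
        have clW: "vadd x (vadd y z) \<in> P0 \<union> P1" if "x \<in> P0 \<union> P1" "y \<in> P0 \<union> P1" "z \<in> P0 \<union> P1" for x y z
        proof -
          have s1: "vadd x (vadd y z) = vadd y (vadd x z)" "vadd x (vadd y z) = vadd z (vadd x y)"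
            "vadd x (vadd y z) = vadd x (vadd z y)" "vadd x (vadd y z) = vadd y (vadd z x)"
            by (simp_all add: vadd_ac)
          show ?thesis using that
            apply (elim UnE)
            using c000 c001 c011 c111 s1 by (metis UnI1 UnI2)+
        qed
        have "card (P0 \<union> P1) = 2 ^ r"
          using card_Un_disjoint[OF finP0 True] c0 ceq r1
          by (metis \<open>2 ^ r = 2 * card P0\<close> mult_2)
        moreover have "P0 \<union> P1 \<subseteq> Vsp m" using P0V P1V by auto
        ultimately have "aff m r (P0 \<union> P1)" unfolding aff_def using clW F0 by blast
        then show ?thesis using True by blast
      qed
      then show ?thesis using r1 a0 a1 by blast
    qed
  qed
  show ?thesis using that P0V P1V Ueq main by blast
qed

end

lemma Lam_add: "x \<in> Lam n \<Longrightarrow> y \<in> Lam n \<Longrightarrow> (\<lambda>v. x v + y v) \<in> Lam n"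
  unfolding Lam_def by (rule zspan_add)
lemma Lam_smult: "x \<in> Lam n \<Longrightarrow> (\<lambda>v. k * x v) \<in> Lam n"
  unfolding Lam_def by (rule zspan_smult)
lemma Lam_zero: "(\<lambda>v. 0) \<in> Lam n"
  unfolding Lam_def by (rule zspan_zero)
lemma Del_add: "x \<in> Del n \<Longrightarrow> y \<in> Del n \<Longrightarrow> (\<lambda>v. x v + y v) \<in> Del n"
  unfolding Del_def by (rule zspan_add)
lemma Del_smult: "x \<in> Del n \<Longrightarrow> (\<lambda>v. k * x v) \<in> Del n"
  unfolding Del_def by (rule zspan_smult)
lemma Del_zero: "(\<lambda>v. 0) \<in> Del n"
  unfolding Del_def by (rule zspan_zero)

context
  fixes m :: nat and b :: "nat \<Rightarrow> nat set"
  assumes injL: "inj_on (lincomb b) (Pow {..<Suc m})"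
    and imgL: "lincomb b ` Pow {..<Suc m} = Vsp (Suc m)"
begin

abbreviation "II \<equiv> mapv (iota_v b) m"
abbreviation "TT \<equiv> mapv (tau_v b m) m"

lemma II_xvec: "A \<subseteq> Vsp m \<Longrightarrow> II (\<lambda>v. c * xvec A v) = (\<lambda>w. c * xvec (iota_v b ` A) w)"
  by (rule mapv_xvec[OF inj_iota[OF injL imgL]])
lemma TT_xvec: "A \<subseteq> Vsp m \<Longrightarrow> TT (\<lambda>v. c * xvec A v) = (\<lambda>w. c * xvec (tau_v b m ` A) w)"
  by (rule mapv_xvec[OF inj_tau[OF injL imgL]])

definition RR where "RR = {(\<lambda>w. II l w + II d w + TT l w) | l d. l \<in> Lam m \<and> d \<in> Del m}"

lemma gen_RR:
  assumes U: "aff (Suc m) r U"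
  shows "(\<lambda>v. 2 ^ ((Suc m - r) div 2) * xvec U v) \<in> RR"
proof -
  obtain P0 P1 where P: "P0 \<subseteq> Vsp m" "P1 \<subseteq> Vsp m" "U = iota_v b ` P0 \<union> tau_v b m ` P1"
    and cases: "(P1 = {} \<and> aff m r P0) \<or> (P0 = {} \<and> aff m r P1) \<or>
     (1 \<le> r \<and> aff m (r - 1) P0 \<and> aff m (r - 1) P1 \<and> (P0 = P1 \<or> (P0 \<inter> P1 = {} \<and> aff m r (P0 \<union> P1))))"
    using decomp[OF injL imgL U] by blast
  define e where "e = (Suc m - r) div 2"
  define c :: int where "c = 2 ^ e"
  define g0 where "g0 = (\<lambda>v. c * xvec P0 v)"
  define g1 where "g1 = (\<lambda>v. c * xvec P1 v)"
  have gexp: "(\<lambda>v. 2 ^ ((Suc m - r) div 2) * xvec U v) = (\<lambda>w. II g0 w + TT g1 w)"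
    unfolding g0_def g1_def II_xvec[OF P(1)] TT_xvec[OF P(2)] P(3) c_def e_def
    using disj_it[OF injL imgL P(1) P(2)] by (simp add: xvec_Un distrib_left)
  have ex: "\<exists>l d. l \<in> Lam m \<and> d \<in> Del m \<and> (\<lambda>w. II l w + II d w + TT l w) = (\<lambda>w. II g0 w + TT g1 w)"
  proof -
    consider (A) "P1 = {}" "aff m r P0" | (B) "P0 = {}" "aff m r P1"
      | (C) "1 \<le> r" "aff m (r - 1) P0" "aff m (r - 1) P1" "P0 = P1"
      | (D) "1 \<le> r" "aff m (r - 1) P0" "aff m (r - 1) P1" "P0 \<inter> P1 = {}" "aff m r (P0 \<union> P1)"
      using cases by blast
    then show ?thesis
    proof cases
      case A
      have f1: "g0 \<in> Del m" unfolding g0_def c_def e_def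
        using gen_Del[OF A(2)] ar1[OF aff_le[OF A(2)]] by blast
      have f2: "TT g1 = (\<lambda>w. 0)" unfolding g1_def using A(1) by (simp add: xvec_def mapv_zero)
      show ?thesis apply (rule exI[of _ "\<lambda>v. 0"], rule exI[of _ g0])
        using f1 f2 Lam_zero by (simp add: mapv_zero)
    next
      case B
      have l: "g1 \<in> Lam m" unfolding g1_def c_def e_def using gen_Lam[OF B(2) ar2] .
      have "g1 \<in> Del m" unfolding g1_def c_def e_def
        using gen_Del[OF B(2)] ar1[OF aff_le[OF B(2)]] by blast
      then have d: "(\<lambda>v. (-1) * g1 v) \<in> Del m" by (rule Del_smult)
      have z: "II g0 = (\<lambda>w. 0)" unfolding g0_def using B(1) by (simp add: xvec_def mapv_zero)
      show ?thesis apply (rule exI[of _ g1], rule exI[of _ "\<lambda>v. (-1) * g1 v"])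
        using z l d mapv_smult[of "iota_v b" m "-1" g1] by simp
    next
      case C
      have l: "g1 \<in> Lam m" unfolding g1_def c_def e_def using gen_Lam[OF C(3) ar3[OF C(1)]] .
      show ?thesis apply (rule exI[of _ g1], rule exI[of _ "\<lambda>v. 0"])
        using l Del_zero C(4) unfolding g0_def g1_def by (simp add: mapv_zero)
    next
      case D
      have l: "g1 \<in> Lam m" unfolding g1_def c_def e_def using gen_Lam[OF D(3) ar3[OF D(1)]] .
      have rle: "r \<le> Suc m" using aff_le[OF U] .
      define d where "d = (\<lambda>v. g0 v + (-1) * g1 v)"
      have d1: "(\<lambda>v. 2 ^ Suc e * xvec P0 v) \<in> Del m" unfolding e_def
        using gen_Del[OF D(2)] ar4[OF D(1) rle] by blast
      have d2: "(\<lambda>v. 2 ^ e * xvec (P0 \<union> P1) v) \<in> Del m" unfolding e_def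
        using gen_Del[OF D(5)] ar1[OF aff_le[OF D(5)]] by blast
      have d2': "(\<lambda>v. (-1) * (2 ^ e * xvec (P0 \<union> P1) v)) \<in> Del m" using Del_smult[OF d2] .
      have "d = (\<lambda>v. 2 ^ Suc e * xvec P0 v + (-1) * (2 ^ e * xvec (P0 \<union> P1) v))"
        unfolding d_def g0_def g1_def c_def
      proof (rule ext)
        fix v
        show "2 ^ e * xvec P0 v + -1 * (2 ^ e * xvec P1 v) =
          2 ^ Suc e * xvec P0 v + -1 * (2 ^ e * xvec (P0 \<union> P1) v)"
          using D(4) by (cases "v \<in> P0"; cases "v \<in> P1") (auto simp: xvec_def)
      qed
      then have dD: "d \<in> Del m" using Del_add[OF d1 d2'] by simp
      have Id: "II d = (\<lambda>w. II g0 w + (-1) * II g1 w)" unfolding d_def mapv_add mapv_smult ..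
      show ?thesis apply (rule exI[of _ g1], rule exI[of _ d])
        using Id l dD by auto
    qed
  qed
  then show ?thesis unfolding RR_def gexp by (metis (mono_tags, lifting) mem_Collect_eq)
qed

lemma main_eq: "Lam (Suc m) = RR"
proof
  show "Lam (Suc m) \<subseteq> RR"
    unfolding Lam_def[of "Suc m"]
  proof (rule zspan_least)
    show "(\<lambda>v. 0) \<in> RR" unfolding RR_def using Lam_zero Del_zero
      by (auto simp: mapv_zero intro!: exI[of _ "\<lambda>v. 0"])
    show "(\<lambda>v. x v + y v) \<in> RR" if xyR: "x \<in> RR" "y \<in> RR" for x y
    proof -
      obtain l1 d1 l2 d2 where h: "l1 \<in> Lam m" "d1 \<in> Del m" "l2 \<in> Lam m" "d2 \<in> Del m"
        "x = (\<lambda>w. II l1 w + II d1 w + TT l1 w)" "y = (\<lambda>w. II l2 w + II d2 w + TT l2 w)"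
        using xyR unfolding RR_def by blast
      have "(\<lambda>v. x v + y v) = (\<lambda>w. II (\<lambda>v. l1 v + l2 v) w + II (\<lambda>v. d1 v + d2 v) w + TT (\<lambda>v. l1 v + l2 v) w)"
        unfolding h(5,6) mapv_add by (simp add: algebra_simps)
      then show ?thesis unfolding RR_def using Lam_add[OF h(1,3)] Del_add[OF h(2,4)] by blast
    qed
    show "(\<lambda>v. k * x v) \<in> RR" if xR: "x \<in> RR" for x k
    proof -
      obtain l1 d1 where h: "l1 \<in> Lam m" "d1 \<in> Del m" "x = (\<lambda>w. II l1 w + II d1 w + TT l1 w)"
        using xR unfolding RR_def by blast
      have "(\<lambda>v. k * x v) = (\<lambda>w. II (\<lambda>v. k * l1 v) w + II (\<lambda>v. k * d1 v) w + TT (\<lambda>v. k * l1 v) w)"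
        unfolding h(3) mapv_smult by (simp add: algebra_simps)
      then show ?thesis unfolding RR_def using Lam_smult[OF h(1)] Del_smult[OF h(2)] by blast
    qed
    show "{\<lambda>v. 2 ^ ((Suc m - r) div 2) * xvec U v |r U. r \<le> Suc m \<and> affine_sub (Suc m) r U} \<subseteq> RR"
      using gen_RR affine_sub_iff by blast
  qed
next
  have hl: "Lam m \<subseteq> {l. (\<lambda>w. II l w + TT l w) \<in> Lam (Suc m)}"
    unfolding Lam_def[of m]
  proof (rule zspan_least)
    show "(\<lambda>v. 0) \<in> {l. (\<lambda>w. II l w + TT l w) \<in> Lam (Suc m)}" using Lam_zero by (simp add: mapv_zero)
    show "(\<lambda>v. x v + y v) \<in> {l. (\<lambda>w. II l w + TT l w) \<in> Lam (Suc m)}"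
      if "x \<in> {l. (\<lambda>w. II l w + TT l w) \<in> Lam (Suc m)}" "y \<in> {l. (\<lambda>w. II l w + TT l w) \<in> Lam (Suc m)}" for x y
      using Lam_add[OF that[simplified]] by (simp add: mapv_add algebra_simps)
    show "(\<lambda>v. k * x v) \<in> {l. (\<lambda>w. II l w + TT l w) \<in> Lam (Suc m)}"
      if "x \<in> {l. (\<lambda>w. II l w + TT l w) \<in> Lam (Suc m)}" for x k
      using Lam_smult[OF that[simplified], of k] by (simp add: mapv_smult algebra_simps)
    show "{\<lambda>v. 2 ^ ((m - r) div 2) * xvec U v |r U. r \<le> m \<and> affine_sub m r U}
        \<subseteq> {l. (\<lambda>w. II l w + TT l w) \<in> Lam (Suc m)}"
    proof
      fix g assume "g \<in> {\<lambda>v. 2 ^ ((m - r) div 2) * xvec U v |r U. r \<le> m \<and> affine_sub m r U}"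
      then obtain r U where g: "g = (\<lambda>v. 2 ^ ((m - r) div 2) * xvec U v)" "aff m r U"
        using affine_sub_iff by blast
      have UV: "U \<subseteq> Vsp m" using g(2) by (simp add: aff_def)
      have "(\<lambda>w. II g w + TT g w) = (\<lambda>w. 2 ^ ((m - r) div 2) * xvec (iota_v b ` U \<union> tau_v b m ` U) w)"
        unfolding g(1) II_xvec[OF UV] TT_xvec[OF UV]
        using disj_it[OF injL imgL UV UV] by (simp add: xvec_Un distrib_left)
      moreover have "(\<lambda>w. 2 ^ ((m - r) div 2) * xvec (iota_v b ` U \<union> tau_v b m ` U) w) \<in> Lam (Suc m)"
        using gen_Lam[OF aff_double_img[OF injL imgL g(2)] ar5] .
      ultimately show "g \<in> {l. (\<lambda>w. II l w + TT l w) \<in> Lam (Suc m)}" by simp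
    qed
  qed
  have hd: "Del m \<subseteq> {d. II d \<in> Lam (Suc m)}"
    unfolding Del_def[of m]
  proof (rule zspan_least)
    show "(\<lambda>v. 0) \<in> {d. II d \<in> Lam (Suc m)}" using Lam_zero by (simp add: mapv_zero)
    show "(\<lambda>v. x v + y v) \<in> {d. II d \<in> Lam (Suc m)}"
      if "x \<in> {d. II d \<in> Lam (Suc m)}" "y \<in> {d. II d \<in> Lam (Suc m)}" for x y
      using Lam_add[OF that[simplified]] by (simp add: mapv_add)
    show "(\<lambda>v. k * x v) \<in> {d. II d \<in> Lam (Suc m)}"
      if "x \<in> {d. II d \<in> Lam (Suc m)}" for x k
      using Lam_smult[OF that[simplified], of k] by (simp add: mapv_smult)
    show "{\<lambda>v. 2 ^ ((m - r + 1) div 2) * xvec U v |r U. r \<le> m \<and> affine_sub m r U}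
        \<subseteq> {d. II d \<in> Lam (Suc m)}"
    proof
      fix g assume "g \<in> {\<lambda>v. 2 ^ ((m - r + 1) div 2) * xvec U v |r U. r \<le> m \<and> affine_sub m r U}"
      then obtain r U where g: "g = (\<lambda>v. 2 ^ ((m - r + 1) div 2) * xvec U v)" "aff m r U" "r \<le> m"
        using affine_sub_iff by blast
      have UV: "U \<subseteq> Vsp m" using g(2) by (simp add: aff_def)
      have "(Suc m - r) div 2 \<le> (m - r + 1) div 2" using g(3) by presburger
      then have "(\<lambda>w. 2 ^ ((m - r + 1) div 2) * xvec (iota_v b ` U) w) \<in> Lam (Suc m)"
        using gen_Lam[OF aff_iota[OF injL imgL g(2)]] by blast
      then show "g \<in> {d. II d \<in> Lam (Suc m)}" unfolding g(1) by (simp add: II_xvec[OF UV])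
    qed
  qed
  show "RR \<subseteq> Lam (Suc m)"
  proof
    fix x assume "x \<in> RR"
    then obtain l d where h: "l \<in> Lam m" "d \<in> Del m" "x = (\<lambda>w. II l w + II d w + TT l w)"
      unfolding RR_def by blast
    have "(\<lambda>w. (II l w + TT l w) + II d w) \<in> Lam (Suc m)"
      using Lam_add hl hd h(1,2) by blast
    moreover have "(\<lambda>w. (II l w + TT l w) + II d w) = x" unfolding h(3) by (simp add: algebra_simps)
    ultimately show "x \<in> Lam (Suc m)" by simp
  qed
qed

end

theorem theorem3p2:
  fixes m :: nat and b :: "nat \<Rightarrow> nat set"
  assumes "m \<ge> 1"
    and "\<forall>i\<le>m. b i \<in> Vsp (Suc m)"
    and "bij_betw (lincomb b) (Pow {..<Suc m}) (Vsp (Suc m))"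
  shows "Lam (Suc m) =
    {(\<lambda>w. iota_vec b m l w + iota_vec b m d w + tau_vec b m l w) | l d. l \<in> Lam m \<and> d \<in> Del m}"
proof -
  have injL: "inj_on (lincomb b) (Pow {..<Suc m})" and imgL: "lincomb b ` Pow {..<Suc m} = Vsp (Suc m)"
    using assms(3) unfolding bij_betw_def by auto
  have i: "iota_vec b m = mapv (iota_v b) m" and t: "tau_vec b m = mapv (tau_v b m) m"
    by (rule ext, simp add: iota_vec_def tau_vec_def mapv_def)+
  show ?thesis using main_eq[OF injL imgL] unfolding RR_def[OF injL imgL] i t .
qed

end
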